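(* Let $t\ge2$ and $v\ge2$ be integers. Then an optimum $(d,t)$-CDA$((d+1)v^t;2t,v)$ exists for every positive integer $d$ with $d+1\le v$.
   Context: Consecutive $t$-way interaction in an $N\times k$ array $A=(a_{ij})$ over a $v$-set $V$: $T=\{(i,x_i),\dots,(i+t-1,x_{i+t-1})\}$, $1\le i\le k-t+1$, $x_r\in V$; $\rho(A,T)=\{r: a_{r,j}=x_j\ \forall (j,x_j)\in T\}$, $\rho(A,\mathcal T)=\bigcup_{T\in\mathcal T}\rho(A,T)$. A $(d,t)$-CDA$(N;k,v)$ is an $N\times k$ array over $V$ in which every $t$ consecutive columns contain every $t$-tuple at least once, and such that for every set $\mathcal T$ of exactly $d$ distinct consecutive $t$-way interactions and every consecutive $t$-way interaction $T$: $\rho(A,T)\subseteq\rho(A,\mathcal T)$ iff $T\in\mathcal T$. It is optimum if $N=(d+1)v^t$. *)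

theory Defs
  imports Main
begin

text \<open>An N x k array over a v-set V is a function A :: nat => nat => 'a whose entries
  A r j for r < N, j < k lie in V (rows and columns are 0-indexed).
  A consecutive t-way interaction is a pair (i, xs) where i is the starting column
  (0-indexed, i + t <= k) and xs is a list of length t over V; it stands for
  {(i, xs!0), ..., (i+t-1, xs!(t-1))}.\<close>

definition is_array :: "nat \<Rightarrow> nat \<Rightarrow> 'a set \<Rightarrow> (nat \<Rightarrow> nat \<Rightarrow> 'a) \<Rightarrow> bool" where
  "is_array N k V A \<longleftrightarrow> (\<forall>r<N. \<forall>j<k. A r j \<in> V)"

definition cons_interactions :: "nat \<Rightarrow> nat \<Rightarrow> 'a set \<Rightarrow> (nat \<times> 'a list) set" where
  "cons_interactions k t V = {(i, xs). i + t \<le> k \<and> length xs = t \<and> set xs \<subseteq> V}"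

definition rho :: "nat \<Rightarrow> (nat \<Rightarrow> nat \<Rightarrow> 'a) \<Rightarrow> nat \<times> 'a list \<Rightarrow> nat set" where
  "rho N A T = {r. r < N \<and> (\<forall>j<length (snd T). A r (fst T + j) = snd T ! j)}"

definition rho_set :: "nat \<Rightarrow> (nat \<Rightarrow> nat \<Rightarrow> 'a) \<Rightarrow> (nat \<times> 'a list) set \<Rightarrow> nat set" where
  "rho_set N A TT = (\<Union>T\<in>TT. rho N A T)"

definition is_CDA :: "nat \<Rightarrow> nat \<Rightarrow> nat \<Rightarrow> nat \<Rightarrow> 'a set \<Rightarrow> (nat \<Rightarrow> nat \<Rightarrow> 'a) \<Rightarrow> bool" where
  "is_CDA d t N k V A \<longleftrightarrow>
     is_array N k V A \<and>
     (\<forall>T\<in>cons_interactions k t V. rho N A T \<noteq> {}) \<and>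
     (\<forall>TT. TT \<subseteq> cons_interactions k t V \<longrightarrow> finite TT \<longrightarrow> card TT = d \<longrightarrow>
        (\<forall>T\<in>cons_interactions k t V. rho N A T \<subseteq> rho_set N A TT \<longleftrightarrow> T \<in> TT))"

end

theory Submission
  imports Defs
begin

definition Cf :: "nat \<Rightarrow> nat \<Rightarrow> nat \<times> nat list \<Rightarrow> nat \<Rightarrow> nat" where
  "Cf v t p j = (snd p ! (j mod t) + fst p * (j div t)) mod v"

definition matches :: "nat \<Rightarrow> nat \<Rightarrow> nat \<times> nat list \<Rightarrow> nat \<times> nat list \<Rightarrow> bool" where
  "matches v t p T = (\<forall>j<length (snd T). Cf v t p (fst T + j) = snd T ! j)"

lemma mod_cancel_aux:
  fixes a b s v :: nat
  assumes "a < v" "b < v" "(a + s) mod v = (b + s) mod v"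
  shows "a = b"
proof -
  have gen: "a' = b'" if "a' < v" "b' < v" "b' \<le> a'" "(a' + s) mod v = (b' + s) mod v" for a' b' :: nat
  proof -
    have "v dvd (a' + s) - (b' + s)" using that mod_eq_dvd_iff_nat[of "b'+s" "a'+s" v] by simp
    hence "v dvd a' - b'" by simp
    moreover have "a' - b' < v" using that by simp
    ultimately have "a' - b' = 0" using dvd_imp_le by (metis neq0_conv not_less)
    thus ?thesis using that by simp
  qed
  show ?thesis
  proof (cases "b \<le> a")
    case True then show ?thesis using gen assms by blast
  next
    case False then show ?thesis using gen[of b a] assms by simp
  qed
qed

lemma K1:
  fixes v t i s :: nat and xs :: "nat list"
  assumes "t \<ge> 1" "i \<le> t" "length xs = t" "set xs \<subseteq> {0..<v}" "s < v"
  shows "\<exists>x. set x \<subseteq> {0..<v} \<and> length x = t \<and> matches v t (s, x) (i, xs)"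
proof -
  have v0: "v > 0" using assms(5) by simp
  have xsv: "\<And>p. p < t \<Longrightarrow> xs ! p < v" using assms(3,4) by (auto simp: subset_iff)
  define x where "x = map (\<lambda>q. if i \<le> q then xs!(q-i) else (xs!(q+t-i) + (v - s)) mod v) [0..<t]"
  have lx: "length x = t" by (simp add: x_def)
  have sx: "set x \<subseteq> {0..<v}"
  proof
    fix y assume "y \<in> set x"
    then obtain q where q: "q < t" "y = (if i \<le> q then xs!(q-i) else (xs!(q+t-i) + (v - s)) mod v)"
      by (auto simp: x_def)
    show "y \<in> {0..<v}" using q xsv[of "q-i"] v0 assms(2) by (auto split: if_splits)
  qed
  have "matches v t (s, x) (i, xs)"
    unfolding matches_def
  proof (intro allI impI)
    fix p assume "p < length (snd (i, xs))"
    hence p: "p < t" using assms(3) by simp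
    show "Cf v t (s, x) (fst (i, xs) + p) = snd (i, xs) ! p"
    proof (cases "i + p < t")
      case True
      have "x ! (i+p) = xs ! p" using True by (simp add: x_def)
      thus ?thesis using True xsv[OF p] by (simp add: Cf_def)
    next
      case False
      define q where "q = i + p - t"
      have q: "q < i" "q < t" "i + p = q + t" using False p assms(2) by (auto simp: q_def)
      have m: "(i + p) mod t = q" "(i+p) div t = 1" using q by (auto simp: div_add_self2)
      have "q + t - i = p" using q by simp
      hence "x ! q = (xs!p + (v - s)) mod v" using q by (simp add: x_def)
      hence "Cf v t (s, x) (i + p) = ((xs!p + (v - s)) mod v + s) mod v"
        by (simp add: Cf_def m)
      also have "\<dots> = (xs!p + (v - s) + s) mod v" by (simp add: mod_add_left_eq)
      also have "\<dots> = xs ! p" using assms(5) xsv[OF p] by simp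
      finally show ?thesis by simp
    qed
  qed
  thus ?thesis using lx sx by blast
qed

lemma K2_lt:
  fixes v t i i' s s' :: nat and x x' xs xs' :: "nat list"
  assumes "i < i'" "i' \<le> t" "length xs = t" "length xs' = t"
    "length x = t" "length x' = t" "set x \<subseteq> {0..<v}" "set x' \<subseteq> {0..<v}" "s < v" "s' < v"
    "matches v t (s, x) (i, xs)" "matches v t (s, x) (i', xs')"
    "matches v t (s', x') (i, xs)" "matches v t (s', x') (i', xs')"
  shows "(s, x) = (s', x')"
proof -
  have xv: "\<And>q. q < t \<Longrightarrow> x ! q < v" using assms(5,7) by (auto simp: subset_iff)
  have xv': "\<And>q. q < t \<Longrightarrow> x' ! q < v" using assms(6,8) by (auto simp: subset_iff)
  have eq: "Cf v t (s, x) j = Cf v t (s', x') j" if "i \<le> j" "j < i' + t" for j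
  proof (cases "j < i + t")
    case True
    have "j - i < length xs" using True that assms(3) by simp
    then have "Cf v t (s, x) (i + (j - i)) = xs ! (j - i)" "Cf v t (s', x') (i + (j - i)) = xs ! (j - i)"
      using assms(11,13) unfolding matches_def by auto
    then show ?thesis using that by simp
  next
    case False
    have "j - i' < length xs'" using False that assms(4,1,2) by simp
    then have "Cf v t (s, x) (i' + (j - i')) = xs' ! (j - i')" "Cf v t (s', x') (i' + (j - i')) = xs' ! (j - i')"
      using assms(12,14) unfolding matches_def by auto
    moreover have "i' + (j - i') = j" using False that assms(1,2) by simp
    ultimately show ?thesis by simp
  qed
  have it: "i < t" using assms(1,2) by simp
  have c1: "Cf v t (s, x) i = x ! i" using it xv[OF it] by (simp add: Cf_def)
  have c1': "Cf v t (s', x') i = x' ! i" using it xv'[OF it] by (simp add: Cf_def)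
  have xi: "x ! i = x' ! i" using eq[of i] c1 c1' assms(1) by simp
  have col2: "\<And>q y r. q < t \<Longrightarrow> Cf v t (r, y) (q + t) = (y ! q + r) mod v"
    by (simp add: Cf_def div_add_self2)
  have "(x ! i + s) mod v = (x ! i + s') mod v"
    using eq[of "i+t"] col2[OF it, of s x] col2[OF it, of s' x'] xi assms(1) by simp
  hence ss: "s = s'" using mod_cancel_aux[OF assms(9,10), of "x!i"]
    by (simp add: add.commute)
  have "x ! q = x' ! q" if q: "q < t" for q
  proof (cases "i \<le> q")
    case True
    have "Cf v t (s, x) q = x ! q" "Cf v t (s', x') q = x' ! q"
      using q xv[OF q] xv'[OF q] by (simp_all add: Cf_def)
    then show ?thesis using eq[of q] True q by simp
  next
    case False
    have "(x ! q + s) mod v = (x' ! q + s) mod v"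
      using eq[of "q+t"] col2[OF q, of s x] col2[OF q, of s' x'] ss False q assms(1,2) by simp
    then show ?thesis using mod_cancel_aux[OF xv[OF q] xv'[OF q]] by simp
  qed
  hence "x = x'" using assms(5,6) by (simp add: nth_equalityI)
  thus ?thesis using ss by simp
qed


lemma K2:
  fixes v t :: nat
  assumes "T \<in> cons_interactions (2*t) t {0..<v}" "T' \<in> cons_interactions (2*t) t {0..<v}" "T \<noteq> T'"
    "length x = t" "length x' = t" "set x \<subseteq> {0..<v}" "set x' \<subseteq> {0..<v}" "s < v" "s' < v"
    "matches v t (s, x) T" "matches v t (s, x) T'"
    "matches v t (s', x') T" "matches v t (s', x') T'"
  shows "(s, x) = (s', x')"
proof -
  obtain i xs where T: "T = (i, xs)" by fastforce
  obtain i' xs' where T': "T' = (i', xs')" by fastforce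
  have li: "i \<le> t" "length xs = t" "i' \<le> t" "length xs' = t"
    using assms(1,2) T T' by (auto simp: cons_interactions_def)
  show ?thesis
  proof (cases "i = i'")
    case True
    have "xs = xs'"
    proof (rule nth_equalityI)
      show "length xs = length xs'" using li by simp
      fix j assume "j < length xs"
      thus "xs ! j = xs' ! j" using assms(10,11) T T' True li unfolding matches_def by auto
    qed
    with True T T' assms(3) show ?thesis by simp
  next
    case False
    show ?thesis
    proof (cases "i < i'")
      case True
      show ?thesis using K2_lt[OF True li(3) li(2) li(4) assms(4-9)] assms(10-13) T T' by simp
    next
      case F2: False
      hence lt: "i' < i" using False by simp
      show ?thesis using K2_lt[OF lt li(1) li(4) li(2) assms(4-9)] assms(10-13) T T' by simp
    qed
  qed
qed

theorem mainTheorem8: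
  fixes t v d :: nat
  assumes "t \<ge> 2" and "v \<ge> 2" and "d \<ge> 1" and "d + 1 \<le> v"
  shows "\<exists>A :: nat \<Rightarrow> nat \<Rightarrow> nat. is_CDA d t ((d + 1) * v ^ t) (2 * t) {0..<v} A"
proof -
  define N where "N = (d + 1) * v ^ t"
  define L where "L = {xs :: nat list. set xs \<subseteq> {0..<v} \<and> length xs = t}"
  define PP where "PP = {0..<d+1} \<times> L"
  have finL: "finite L" unfolding L_def by (rule finite_lists_length_eq) simp
  have cL: "card L = v ^ t" unfolding L_def by (subst card_lists_length_eq) simp_all
  have "card PP = N" unfolding PP_def N_def by (simp add: card_cartesian_product cL)
  moreover have "finite PP" unfolding PP_def using finL by simp
  ultimately obtain f where bij: "bij_betw f {0..<N} PP"
    using finite_same_card_bij[of "{0..<N}" PP] by auto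
  have fPP: "f r \<in> PP" if "r < N" for r using bij that by (auto simp: bij_betw_def)
  have finj: "inj_on f {0..<N}" using bij by (simp add: bij_betw_def)
  define A where "A = (\<lambda>r j. Cf v t (f r) j)"
  let ?CI = "cons_interactions (2*t) t {0..<v}"
  have rhoeq: "rho N A T = {r. r < N \<and> matches v t (f r) T}" for T
    unfolding rho_def matches_def A_def by simp
  have big: "d + 1 \<le> card (rho N A T)" if T: "T \<in> ?CI" for T
  proof -
    obtain i xs where Tis: "T = (i, xs)" by (cases T)
    have ii: "i \<le> t" "length xs = t" "set xs \<subseteq> {0..<v}" using T Tis by (auto simp: cons_interactions_def)
    have "\<forall>s\<in>{0..<d+1}. \<exists>x. set x \<subseteq> {0..<v} \<and> length x = t \<and> matches v t (s, x) T"
    proof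
      fix s assume "s \<in> {0..<d+1}"
      hence "s < v" using assms(4) by simp
      thus "\<exists>x. set x \<subseteq> {0..<v} \<and> length x = t \<and> matches v t (s, x) T"
      proof -
        have "t \<ge> 1" using assms(1) by simp
        from K1[OF this ii(1) ii(2) ii(3) \<open>s < v\<close>] show ?thesis unfolding Tis .
      qed
    qed
    from bchoice[OF this] obtain g where g0: "\<forall>s\<in>{0..<d+1}. set (g s) \<subseteq> {0..<v} \<and> length (g s) = t \<and> matches v t (s, g s) T"
      by (elim exE)
    have g: "set (g s) \<subseteq> {0..<v} \<and> length (g s) = t \<and> matches v t (s, g s) T" if "s < d+1" for s
      using g0 that by simp
    define h where "h s = inv_into {0..<N} f (s, g s)" for s
    have hp: "h s < N \<and> f (h s) = (s, g s)" if "s < d + 1" for s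
    proof -
      have "(s, g s) \<in> PP" using g[OF that] that by (simp add: PP_def L_def)
      hence "(s, g s) \<in> f ` {0..<N}" using bij by (simp add: bij_betw_def)
      thus ?thesis unfolding h_def using inv_into_into[of "(s, g s)" f "{0..<N}"] by (simp add: f_inv_into_f)
    qed
    have "inj_on h {0..<d+1}"
    proof (rule inj_onI)
      fix a b assume "a \<in> {0..<d+1}" "b \<in> {0..<d+1}" "h a = h b"
      hence ab: "a < d + 1" "b < d + 1" "h a = h b" by simp_all
      have "(a, g a) = f (h a)" using conjunct2[OF hp[OF ab(1)]] by simp
      also have "\<dots> = f (h b)" using ab(3) by simp
      also have "\<dots> = (b, g b)" using conjunct2[OF hp[OF ab(2)]] by simp
      finally show "a = b" by simp
    qed
    moreover have "h ` {0..<d+1} \<subseteq> rho N A T"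
    proof
      fix r assume "r \<in> h ` {0..<d+1}"
      then obtain s where s: "s < d + 1" "r = h s" by auto
      have "r < N" "f r = (s, g s)" using hp[OF s(1)] s(2) by auto
      moreover have "matches v t (s, g s) T" using g[OF s(1)] by simp
      ultimately show "r \<in> rho N A T" unfolding rhoeq by simp
    qed
    moreover have "finite (rho N A T)" by (simp add: rhoeq)
    ultimately have "card {0..<d+1} \<le> card (rho N A T)" by (rule card_inj_on_le)
    thus ?thesis by simp
  qed
  have small: "card (rho N A T \<inter> rho N A T') \<le> 1" if "T \<in> ?CI" "T' \<in> ?CI" "T \<noteq> T'" for T T'
  proof -
    have "\<forall>a\<in>rho N A T \<inter> rho N A T'. \<forall>b\<in>rho N A T \<inter> rho N A T'. a = b"
    proof (intro ballI)
      fix a b assume a: "a \<in> rho N A T \<inter> rho N A T'" and b: "b \<in> rho N A T \<inter> rho N A T'"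
      obtain s x where fa: "f a = (s, x)" by fastforce
      obtain s' x' where fb: "f b = (s', x')" by fastforce
      have an: "a < N" "b < N" using a b by (auto simp: rhoeq)
      have "(s,x) \<in> PP" "(s',x') \<in> PP" using fPP[OF an(1)] fPP[OF an(2)] fa fb by auto
      hence props: "length x = t" "length x' = t" "set x \<subseteq> {0..<v}" "set x' \<subseteq> {0..<v}" "s < v" "s' < v"
        using assms(4) by (auto simp: PP_def L_def)
        have m: "matches v t (s, x) T" "matches v t (s, x) T'" "matches v t (s', x') T" "matches v t (s', x') T'"
        using a b fa fb unfolding rhoeq by auto
      have "(s, x) = (s', x')"
        using K2[OF that props m] .
      hence "f a = f b" using fa fb by simp
      thus "a = b" using finj an by (auto simp: inj_on_def)
    qed
    moreover have "finite (rho N A T \<inter> rho N A T')" by (simp add: rhoeq)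
    ultimately show ?thesis by (simp add: card_le_Suc0_iff_eq)
  qed
  have "is_CDA d t N (2 * t) {0..<v} A"
    unfolding is_CDA_def
  proof (intro conjI ballI allI impI)
    show "is_array N (2 * t) {0..<v} A"
      unfolding is_array_def A_def Cf_def using assms(2) by simp
  next
    fix T assume T: "T \<in> ?CI"
    have "card (rho N A T) \<noteq> 0" using big[OF T] by simp
    thus "rho N A T \<noteq> {}" by auto
  next
    fix TT T assume TT: "TT \<subseteq> ?CI" "finite TT" "card TT = d" and T: "T \<in> ?CI"
    show "rho N A T \<subseteq> rho_set N A TT \<longleftrightarrow> T \<in> TT"
    proof
      assume sub: "rho N A T \<subseteq> rho_set N A TT"
      show "T \<in> TT"
      proof (rule ccontr)
        assume nT: "T \<notin> TT"
        have "rho N A T = (\<Union>T'\<in>TT. rho N A T \<inter> rho N A T')"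
          using sub by (auto simp: rho_set_def)
        hence "card (rho N A T) \<le> (\<Sum>T'\<in>TT. card (rho N A T \<inter> rho N A T'))"
          using card_UN_le[OF TT(2), of "\<lambda>T'. rho N A T \<inter> rho N A T'"] by simp
        also have "\<dots> \<le> (\<Sum>T'\<in>TT. 1)"
        proof (rule sum_mono)
          fix T' assume T': "T' \<in> TT"
          hence "T' \<in> ?CI" "T \<noteq> T'" using TT nT by auto
          thus "card (rho N A T \<inter> rho N A T') \<le> 1" using small[OF T] by blast
        qed
        also have "\<dots> = d" using TT by simp
        finally show False using big[OF T] by simp
      qed
    next
      assume "T \<in> TT"
      thus "rho N A T \<subseteq> rho_set N A TT" by (auto simp: rho_set_def)
    qed
  qed
  thus ?thesis unfolding N_def by blast
qed

end
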